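(* Consider the full-duplex (FD) two-stage relay selection (TRS) scheme described in the context, with $\varpi=1$, thresholds $\gamma_{th_j}=2^{R_{D_j}}-1$ for $j=1,2$, and power coefficients satisfying $0<a_1<a_2$, $a_1+a_2=1$, $a_2>a_1\gamma_{th_2}$. Then its diversity order is zero: $$-\lim_{\rho\to\infty}\frac{\log P_{TRS}^{FD}(\rho)}{\log\rho}=0 .$$
   Context: Network model. A base station (BS) is at the origin of the plane. There are $K\ge 1$ relays $R_1,\dots,R_K$ whose positions are i.i.d. uniformly distributed in the disc of radius $R_{\mathcal D}>0$ centred at the origin; $d_{SR_i}$ is the distance from the BS to $R_i$. Two users $D_1,D_2$ are at fixed points of the plane at distances $d_1,d_2>0$ from the BS, and $d_{R_iD_j}$ is the Euclidean distance between $R_i$ and $D_j$. Let $\alpha>0$ be the path loss exponent. The random variables $g_{SR_i}$, $g_{R_iD_1}$, $g_{R_iD_2}$ ($i=1,\dots,K$) are exponentially distributed with mean $1$ (squared magnitudes of $\mathcal{CN}(0,1)$ Rayleigh coefficients), $Z_i$ is exponentially distributed with mean $\Omega_{LI}>0$ (loop-interference gain at $R_i$), and all of these are mutually independent and independent of the relay positions. Put $X_i=g_{SR_i}/(1+d_{SR_i}^\alpha)$ and $Y_{ji}=g_{R_iD_j}/(1+d_{R_iD_j}^\alpha)$. Let $\rho>0$ be the transmit SNR, $a_1,a_2$ power allocation coefficients, and $\varpi\in\{0,1\}$ the duplex factor. Define $\gamma_{D_2\to R_i}=\frac{\rho X_i a_2}{\rho X_i a_1+\rho\varpi Z_i+1}$,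 $\gamma_{D_1\to R_i}=\frac{\rho X_i a_1}{\rho\varpi Z_i+1}$, $\gamma^{(i)}_{D_2\to D_1}=\frac{\rho Y_{1i}a_2}{\rho Y_{1i}a_1+1}$, $\gamma^{(i)}_{D_1}=\rho Y_{1i}a_1$, $\gamma^{(i)}_{D_2}=\frac{\rho Y_{2i}a_2}{\rho Y_{2i}a_1+1}$. Target rates $R_{D_1},R_{D_2}>0$ are given; in FD mode $\varpi=1$ and $\gamma_{th_j}=2^{R_{D_j}}-1$. TRS scheme: let $S=\{i: \gamma_{D_2\to R_i}\ge\gamma_{th_2},\ \gamma^{(i)}_{D_2\to D_1}\ge\gamma_{th_2},\ \gamma^{(i)}_{D_2}\ge\gamma_{th_2}\}$. The outage event is that either $S=\emptyset$, or $S\neq\emptyset$ and $\max_{i\in S}\min\{\gamma_{D_1\to R_i},\gamma^{(i)}_{D_1}\}<\gamma_{th_1}$; $P_{TRS}(\rho)$ is its probability, and $P_{TRS}^{FD}$ denotes it in FD mode. *)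

theory Defs
  imports "HOL-Probability.Probability"
begin

type_synonym point = "real \<times> real"

text \<open>Per-relay sample: (relay position R_i, (g_SR_i, (g_RiD1, (g_RiD2, Z_i)))).\<close>
type_synonym relay_sample = "point \<times> real \<times> real \<times> real \<times> real"

definition exp_dist :: "real \<Rightarrow> real measure" where
  "exp_dist mu = density lborel (\<lambda>x. ennreal (exponential_density (1 / mu) x))"

definition relay_measure :: "real \<Rightarrow> real \<Rightarrow> relay_sample measure" where
  "relay_measure RD Omega =
     uniform_measure lborel (cball (0::point) RD) \<Otimes>\<^sub>M
     (exp_dist 1 \<Otimes>\<^sub>M (exp_dist 1 \<Otimes>\<^sub>M (exp_dist 1 \<Otimes>\<^sub>M exp_dist Omega)))"

definition network_measure :: "nat \<Rightarrow> real \<Rightarrow> real \<Rightarrow> (nat \<Rightarrow> relay_sample) measure" where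
  "network_measure K RD Omega = PiM {..<K} (\<lambda>_. relay_measure RD Omega)"

definition gth :: "real \<Rightarrow> real" where
  "gth R = 2 powr R - 1"

definition large_scale :: "real \<Rightarrow> real \<Rightarrow> real \<Rightarrow> real" where
  "large_scale alpha d g = g / (1 + d powr alpha)"

definition gD2R :: "real \<Rightarrow> real \<Rightarrow> real \<Rightarrow> real \<Rightarrow> real \<Rightarrow> real \<Rightarrow> real" where
  "gD2R rho a1 a2 w X Z = rho * X * a2 / (rho * X * a1 + rho * w * Z + 1)"

definition gD1R :: "real \<Rightarrow> real \<Rightarrow> real \<Rightarrow> real \<Rightarrow> real \<Rightarrow> real" where
  "gD1R rho a1 w X Z = rho * X * a1 / (rho * w * Z + 1)"

definition gD2D1 :: "real \<Rightarrow> real \<Rightarrow> real \<Rightarrow> real \<Rightarrow> real" where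
  "gD2D1 rho a1 a2 Y = rho * Y * a2 / (rho * Y * a1 + 1)"

definition gD1 :: "real \<Rightarrow> real \<Rightarrow> real \<Rightarrow> real" where
  "gD1 rho a1 Y = rho * Y * a1"

definition gD2 :: "real \<Rightarrow> real \<Rightarrow> real \<Rightarrow> real \<Rightarrow> real" where
  "gD2 rho a1 a2 Y = rho * Y * a2 / (rho * Y * a1 + 1)"

text \<open>Outage event of the TRS scheme. Users D1, D2 at points u1, u2; duplex factor w.\<close>
definition trs_outage ::
  "nat \<Rightarrow> real \<Rightarrow> point \<Rightarrow> point \<Rightarrow> real \<Rightarrow> real \<Rightarrow> real \<Rightarrow> real \<Rightarrow> real \<Rightarrow> real
   \<Rightarrow> (nat \<Rightarrow> relay_sample) \<Rightarrow> bool" where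
  "trs_outage K alpha u1 u2 rho a1 a2 w gth1 gth2 s =
    (let pos = (\<lambda>i. fst (s i));
         X  = (\<lambda>i. large_scale alpha (norm (pos i)) (fst (snd (s i))));
         Y1 = (\<lambda>i. large_scale alpha (dist (pos i) u1) (fst (snd (snd (s i)))));
         Y2 = (\<lambda>i. large_scale alpha (dist (pos i) u2) (fst (snd (snd (snd (s i))))));
         Z  = (\<lambda>i. snd (snd (snd (snd (s i)))));
         S = {i \<in> {..<K}. gD2R rho a1 a2 w (X i) (Z i) \<ge> gth2 \<and>
                           gD2D1 rho a1 a2 (Y1 i) \<ge> gth2 \<and>
                           gD2 rho a1 a2 (Y2 i) \<ge> gth2}
     in S = {} \<or>
        (S \<noteq> {} \<and> Max ((\<lambda>i. min (gD1R rho a1 w (X i) (Z i)) (gD1 rho a1 (Y1 i))) ` S) < gth1))"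

definition P_TRS ::
  "nat \<Rightarrow> real \<Rightarrow> real \<Rightarrow> real \<Rightarrow> point \<Rightarrow> point \<Rightarrow> real \<Rightarrow> real \<Rightarrow> real \<Rightarrow> real \<Rightarrow> real
   \<Rightarrow> real \<Rightarrow> real" where
  "P_TRS K RD Omega alpha u1 u2 a1 a2 w gth1 gth2 rho =
     measure (network_measure K RD Omega)
       {s \<in> space (network_measure K RD Omega).
          trs_outage K alpha u1 u2 rho a1 a2 w gth1 gth2 s}"

definition P_TRS_FD ::
  "nat \<Rightarrow> real \<Rightarrow> real \<Rightarrow> real \<Rightarrow> point \<Rightarrow> point \<Rightarrow> real \<Rightarrow> real \<Rightarrow> real \<Rightarrow> real
   \<Rightarrow> real \<Rightarrow> real" where
  "P_TRS_FD K RD Omega alpha u1 u2 a1 a2 RD1 RD2 rho =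
     P_TRS K RD Omega alpha u1 u2 a1 a2 1 (gth RD1) (gth RD2) rho"

end

theory Submission
  imports Defs
begin

lemma exp_dist_prob: "0 < mu \<Longrightarrow> prob_space (exp_dist mu)"
  unfolding exp_dist_def by (rule prob_space_exponential_density) simp

lemma exp_dist_sets[simp]: "sets (exp_dist mu) = sets borel"
  unfolding exp_dist_def by simp

lemma exp_dist_space[simp]: "space (exp_dist mu) = UNIV"
  unfolding exp_dist_def by simp

lemma exp_dist_Icc: assumes "0 < mu" "0 \<le> a"
  shows "emeasure (exp_dist mu) {0..a} = ennreal (1 - exp (- (1/mu) * a))"
proof -
  have "emeasure (exp_dist mu) {0..a} = emeasure (exp_dist mu) {..a}"
    unfolding exp_dist_def
    by (simp add: emeasure_density, intro nn_integral_cong)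
       (auto simp: exponential_density_def split: split_indicator)
  also have "\<dots> = ennreal (erlang_CDF 0 (1/mu) a)"
    unfolding exp_dist_def using assms by (simp add: emeasure_erlang_density)
  finally show ?thesis using assms by (simp add: erlang_CDF_0)
qed

lemma exp_dist_Ioi: assumes "0 < mu" "0 \<le> c"
  shows "measure (exp_dist mu) {c<..} > 0"
proof -
  interpret prob_space "exp_dist mu" by (rule exp_dist_prob[OF assms(1)])
  have "emeasure (exp_dist mu) {..c} = ennreal (erlang_CDF 0 (1/mu) c)"
    unfolding exp_dist_def using assms by (simp add: emeasure_erlang_density)
  hence m: "measure (exp_dist mu) {..c} = 1 - exp (- (1/mu) * c)"
    using assms by (simp add: measure_def erlang_CDF_0)
  have "measure (exp_dist mu) {c<..} = measure (exp_dist mu) (space (exp_dist mu) - {..c})"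
    by (rule arg_cong[where f="measure _"]) auto
  also have "\<dots> = 1 - measure (exp_dist mu) {..c}"
    by (rule prob_compl) simp
  finally show ?thesis using m by simp
qed

lemma unif_prob: "0 < RD \<Longrightarrow> prob_space (uniform_measure lborel (cball (0::point) RD))"
proof (rule prob_space_uniform_measure)
  assume "0 < RD"
  hence "measure lborel (cball (0::point) RD) > 0" using content_cball_gt_0_iff by blast
  thus "emeasure lborel (cball (0::point) RD) \<noteq> 0"
    by (metis emeasure_lborel_cball_finite less_irrefl measure_def enn2real_0)
  show "emeasure lborel (cball (0::point) RD) \<noteq> \<infinity>"
    using emeasure_lborel_cball_finite[of "0::point" RD] by auto
qed

lemma relay_prob: "0 < RD \<Longrightarrow> 0 < Omega \<Longrightarrow> prob_space (relay_measure RD Omega)"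
  unfolding relay_measure_def
  by (intro prob_space_pair unif_prob exp_dist_prob) auto

lemma net_prob: "0 < RD \<Longrightarrow> 0 < Omega \<Longrightarrow> prob_space (network_measure K RD Omega)"
  unfolding network_measure_def by (intro prob_space_PiM relay_prob)


definition Qr :: "real \<Rightarrow> point \<Rightarrow> point \<Rightarrow> real \<Rightarrow> real \<Rightarrow> real \<Rightarrow> real \<Rightarrow> real \<Rightarrow> real \<Rightarrow> relay_sample \<Rightarrow> bool" where
  "Qr alpha u1 u2 rho a1 a2 w gth1 gth2 r =
    ((gD2R rho a1 a2 w (large_scale alpha (norm (fst r)) (fst (snd r))) (snd (snd (snd (snd r)))) \<ge> gth2 \<and>
      gD2D1 rho a1 a2 (large_scale alpha (dist (fst r) u1) (fst (snd (snd r)))) \<ge> gth2 \<and>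
      gD2 rho a1 a2 (large_scale alpha (dist (fst r) u2) (fst (snd (snd (snd r))))) \<ge> gth2) \<longrightarrow>
     min (gD1R rho a1 w (large_scale alpha (norm (fst r)) (fst (snd r))) (snd (snd (snd (snd r)))))
         (gD1 rho a1 (large_scale alpha (dist (fst r) u1) (fst (snd (snd r))))) < gth1)"

lemma trs_eq: "trs_outage K alpha u1 u2 rho a1 a2 w gth1 gth2 s \<longleftrightarrow>
   (\<forall>i<K. Qr alpha u1 u2 rho a1 a2 w gth1 gth2 (s i))"
proof -
  define S where "S = {i \<in> {..<K}. gD2R rho a1 a2 w (large_scale alpha (norm (fst (s i))) (fst (snd (s i)))) (snd (snd (snd (snd (s i))))) \<ge> gth2 \<and>
      gD2D1 rho a1 a2 (large_scale alpha (dist (fst (s i)) u1) (fst (snd (snd (s i))))) \<ge> gth2 \<and>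
      gD2 rho a1 a2 (large_scale alpha (dist (fst (s i)) u2) (fst (snd (snd (snd (s i)))))) \<ge> gth2}"
  define f where "f = (\<lambda>i. min (gD1R rho a1 w (large_scale alpha (norm (fst (s i))) (fst (snd (s i)))) (snd (snd (snd (snd (s i))))))
         (gD1 rho a1 (large_scale alpha (dist (fst (s i)) u1) (fst (snd (snd (s i)))))))"
  have fin: "finite S" unfolding S_def by simp
  have "trs_outage K alpha u1 u2 rho a1 a2 w gth1 gth2 s \<longleftrightarrow> (S = {} \<or> (S \<noteq> {} \<and> Max (f ` S) < gth1))"
    unfolding trs_outage_def Let_def S_def f_def by simp
  also have "\<dots> \<longleftrightarrow> (\<forall>i\<in>S. f i < gth1)"
    using fin by (cases "S = {}") (auto simp: Max_less_iff)
  also have "\<dots> \<longleftrightarrow> (\<forall>i<K. Qr alpha u1 u2 rho a1 a2 w gth1 gth2 (s i))"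
    unfolding S_def f_def Qr_def by auto
  finally show ?thesis .
qed

lemma large_scale_meas[measurable]:
  assumes [measurable]: "f \<in> borel_measurable M" "g \<in> borel_measurable M"
  shows "(\<lambda>x. large_scale alpha (f x) (g x)) \<in> borel_measurable M"
  unfolding large_scale_def by measurable

lemma gD2R_meas[measurable]:
  assumes [measurable]: "f \<in> borel_measurable M" "g \<in> borel_measurable M"
  shows "(\<lambda>x. gD2R rho a1 a2 w (f x) (g x)) \<in> borel_measurable M"
  unfolding gD2R_def by measurable

lemma gD1R_meas[measurable]:
  assumes [measurable]: "f \<in> borel_measurable M" "g \<in> borel_measurable M"
  shows "(\<lambda>x. gD1R rho a1 w (f x) (g x)) \<in> borel_measurable M"
  unfolding gD1R_def by measurable

lemma gD2D1_meas[measurable]: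
  assumes [measurable]: "f \<in> borel_measurable M"
  shows "(\<lambda>x. gD2D1 rho a1 a2 (f x)) \<in> borel_measurable M"
  unfolding gD2D1_def by measurable

lemma gD2_meas[measurable]:
  assumes [measurable]: "f \<in> borel_measurable M"
  shows "(\<lambda>x. gD2 rho a1 a2 (f x)) \<in> borel_measurable M"
  unfolding gD2_def by measurable

lemma gD1_meas[measurable]:
  assumes [measurable]: "f \<in> borel_measurable M"
  shows "(\<lambda>x. gD1 rho a1 (f x)) \<in> borel_measurable M"
  unfolding gD1_def by measurable

declare exp_dist_sets[measurable_cong] sets_uniform_measure[measurable_cong]

lemma Qr_sets: "{r \<in> space (relay_measure RD Omega). Qr alpha u1 u2 rho a1 a2 w gth1 gth2 r} \<in> sets (relay_measure RD Omega)"
  unfolding relay_measure_def Qr_def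
  by measurable


lemma relay_space[simp]: "space (relay_measure RD Omega) = UNIV"
  unfolding relay_measure_def by (simp add: space_pair_measure)

lemma relay_B_pos:
  assumes "0 < RD" "0 < Omega" "0 \<le> c"
  shows "emeasure (relay_measure RD Omega) (UNIV \<times> ({0..1} \<times> (UNIV \<times> (UNIV \<times> {c<..})))) \<noteq> 0"
proof -
  interpret U: prob_space "uniform_measure lborel (cball (0::point) RD)" by (rule unif_prob) fact
  interpret E1: prob_space "exp_dist 1" by (rule exp_dist_prob) simp
  interpret EO: prob_space "exp_dist Omega" by (rule exp_dist_prob) fact
  interpret P3: prob_space "exp_dist 1 \<Otimes>\<^sub>M exp_dist Omega" by (intro prob_space_pair exp_dist_prob) (use assms in auto)
  interpret P2: prob_space "exp_dist 1 \<Otimes>\<^sub>M (exp_dist 1 \<Otimes>\<^sub>M exp_dist Omega)" by (intro prob_space_pair exp_dist_prob) (use assms in auto)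
  interpret P1: prob_space "exp_dist 1 \<Otimes>\<^sub>M (exp_dist 1 \<Otimes>\<^sub>M (exp_dist 1 \<Otimes>\<^sub>M exp_dist Omega))" by (intro prob_space_pair exp_dist_prob) (use assms in auto)
  have a: "emeasure (exp_dist 1) {0..1} \<noteq> 0"
    by (subst exp_dist_Icc) auto
  have b: "emeasure (exp_dist Omega) {c<..} \<noteq> 0"
    using exp_dist_Ioi[OF assms(2,3)] by (auto simp: measure_def)
  have c3: "emeasure (exp_dist 1 \<Otimes>\<^sub>M exp_dist Omega) (UNIV \<times> {c<..}) \<noteq> 0"
    using b by (simp add: EO.emeasure_pair_measure_Times E1.emeasure_space_1[simplified])
  have c2: "emeasure (exp_dist 1 \<Otimes>\<^sub>M (exp_dist 1 \<Otimes>\<^sub>M exp_dist Omega)) (UNIV \<times> (UNIV \<times> {c<..})) \<noteq> 0"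
    using c3 by (simp add: P3.emeasure_pair_measure_Times E1.emeasure_space_1[simplified])
  have c1: "emeasure (exp_dist 1 \<Otimes>\<^sub>M (exp_dist 1 \<Otimes>\<^sub>M (exp_dist 1 \<Otimes>\<^sub>M exp_dist Omega))) ({0..1} \<times> (UNIV \<times> (UNIV \<times> {c<..}))) \<noteq> 0"
    using c2 a by (simp add: P2.emeasure_pair_measure_Times)
  show ?thesis
    using c1 unfolding relay_measure_def
    by (simp add: P1.emeasure_pair_measure_Times U.emeasure_space_1[simplified])
qed


lemma B_sub:
  assumes "0 < rho" "0 < a2" "0 < g2" "0 < a1" "0 \<le> alpha"
  shows "UNIV \<times> ({0..1} \<times> (UNIV \<times> (UNIV \<times> {a2/g2<..}))) \<subseteq> {r. Qr alpha u1 u2 rho a1 a2 1 g1 g2 r}"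
proof
  fix r :: relay_sample assume "r \<in> UNIV \<times> ({0..1::real} \<times> (UNIV \<times> (UNIV \<times> {a2/g2<..})))"
  then obtain p :: point and g y1 y2 z :: real where r: "r = (p, g, y1, y2, z)"
    and g: "g \<in> {0..(1::real)}" and z: "z \<in> {a2/g2<..}" by auto
  define X where "X = large_scale alpha (norm p) g"
  have d: "1 \<le> 1 + norm p powr alpha" by simp
  have X0: "0 \<le> X" unfolding X_def large_scale_def using g d by simp
  have Xg: "X \<le> g" unfolding X_def large_scale_def
    using divide_left_mono[of 1 "1 + norm p powr alpha" g] g d by simp
  have X1: "X \<le> 1" using Xg g by simp
  have "a2 / g2 < z" using z by simp
  hence zc: "a2 < g2 * z" using assms by (simp add: divide_less_eq mult.commute)
  have "0 < g2 * z" using zc assms by linarith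
  hence z0: "0 < z" using assms by (simp add: zero_less_mult_iff)
  have t1: "0 \<le> rho * X * a1" using X0 assms by simp
  have t2: "0 < rho * 1 * z" using z0 assms by simp
  have den: "0 < rho * X * a1 + rho * 1 * z + 1" using t1 t2 by linarith
  have "rho * X * a2 = (rho * a2) * X" by (simp add: ac_simps)
  also have "\<dots> \<le> rho * a2" using X1 assms by (intro mult_left_le) auto
  also have "\<dots> < rho * (g2 * z)" using zc assms by simp
  also have "\<dots> \<le> g2 * (rho * X * a1 + rho * 1 * z + 1)"
  proof -
    have "0 \<le> g2 * (rho * X * a1 + 1)" using t1 assms by simp
    thus ?thesis by (simp add: algebra_simps)
  qed
  finally have "gD2R rho a1 a2 1 X z < g2"
    unfolding gD2R_def using den by (simp add: divide_less_eq)
  thus "r \<in> {r. Qr alpha u1 u2 rho a1 a2 1 g1 g2 r}" unfolding r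
    unfolding Qr_def X_def by auto
qed


theorem mainTheorem3:
  fixes K :: nat and RD Omega alpha a1 a2 RD1 RD2 :: real and u1 u2 :: "real \<times> real"
  assumes "K \<ge> 1" and "RD > 0" and "Omega > 0" and "alpha > 0"
    and "norm u1 > 0" and "norm u2 > 0"
    and "RD1 > 0" and "RD2 > 0"
    and "0 < a1" and "a1 < a2" and "a1 + a2 = 1" and "a2 > a1 * gth RD2"
  shows "((\<lambda>rho. - (ln (P_TRS_FD K RD Omega alpha u1 u2 a1 a2 RD1 RD2 rho) / ln rho))
           \<longlongrightarrow> 0) at_top"
proof -
  define N where "N = network_measure K RD Omega"
  define g1 where "g1 = gth RD1"
  define g2 where "g2 = gth RD2"
  define B :: "relay_sample set" where "B = UNIV \<times> ({0..1} \<times> (UNIV \<times> (UNIV \<times> {a2/g2<..})))"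
  define E where "E = Pi\<^sub>E {..<K} (\<lambda>_. B)"
  interpret N: prob_space N unfolding N_def by (rule net_prob) (use assms in auto)
  interpret R: prob_space "relay_measure RD Omega" by (rule relay_prob) (use assms in auto)
  interpret PS: product_sigma_finite "\<lambda>_. relay_measure RD Omega"
    by standard
  have g2pos: "0 < g2" unfolding g2_def gth_def using assms(8) by simp
  have a2pos: "0 < a2" using assms by simp
  have spaceN: "space N = Pi\<^sub>E {..<K} (\<lambda>_. UNIV)"
    unfolding N_def network_measure_def by (simp add: space_PiM)
  have Bsets: "B \<in> sets (relay_measure RD Omega)"
    unfolding B_def relay_measure_def by measurable
  have ET: "E \<subseteq> {s \<in> space N. trs_outage K alpha u1 u2 rho a1 a2 1 g1 g2 s}" if "0 < rho" for rho
    using B_sub[OF that a2pos g2pos assms(9), of alpha u1 u2 g1] assms(4)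
    unfolding E_def B_def spaceN trs_eq by (auto simp: PiE_def Pi_def)
  have Tsets: "{s \<in> space N. trs_outage K alpha u1 u2 rho a1 a2 1 g1 g2 s} \<in> sets N" for rho
  proof -
    have "{s \<in> space N. trs_outage K alpha u1 u2 rho a1 a2 1 g1 g2 s} =
          Pi\<^sub>E {..<K} (\<lambda>_. {r \<in> space (relay_measure RD Omega). Qr alpha u1 u2 rho a1 a2 1 g1 g2 r})"
      unfolding spaceN trs_eq by (auto simp: PiE_def Pi_def)
    also have "\<dots> \<in> sets N"
      unfolding N_def network_measure_def by (intro sets_PiM_I_finite Qr_sets) auto
    finally show ?thesis .
  qed
  have Esets: "E \<in> sets N"
    unfolding E_def N_def network_measure_def using Bsets by (intro sets_PiM_I_finite) auto
  have "emeasure N E = (\<Prod>i\<in>{..<K}. emeasure (relay_measure RD Omega) B)"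
    unfolding E_def N_def network_measure_def using Bsets by (intro PS.emeasure_PiM) auto
  moreover have "emeasure (relay_measure RD Omega) B \<noteq> 0"
    unfolding B_def by (rule relay_B_pos) (use assms g2pos a2pos in auto)
  ultimately have "emeasure N E \<noteq> 0" by simp
  hence p0pos: "0 < N.prob E"
    using N.emeasure_eq_measure by (simp add: zero_less_measure_iff)
  define p0 where "p0 = N.prob E"
  have bounds: "p0 \<le> P_TRS_FD K RD Omega alpha u1 u2 a1 a2 RD1 RD2 rho \<and>
                P_TRS_FD K RD Omega alpha u1 u2 a1 a2 RD1 RD2 rho \<le> 1" if "0 < rho" for rho
  proof -
    have eq: "P_TRS_FD K RD Omega alpha u1 u2 a1 a2 RD1 RD2 rho =
          N.prob {s \<in> space N. trs_outage K alpha u1 u2 rho a1 a2 1 g1 g2 s}"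
      unfolding P_TRS_FD_def P_TRS_def N_def g1_def g2_def ..
    show ?thesis unfolding eq p0_def
      using N.finite_measure_mono[OF ET[OF that] Tsets] N.prob_le_1 by auto
  qed
  define M where "M = - ln p0"
  have "((\<lambda>rho. M / ln rho) \<longlongrightarrow> 0) at_top"
    by (intro tendsto_divide_0[OF tendsto_const] filterlim_at_top_imp_at_infinity ln_at_top)
  moreover have "\<forall>\<^sub>F rho in at_top. norm (- (ln (P_TRS_FD K RD Omega alpha u1 u2 a1 a2 RD1 RD2 rho) / ln rho)) \<le> M / ln rho"
    using eventually_gt_at_top[of "1::real"]
  proof eventually_elim
    case (elim rho)
    let ?P = "P_TRS_FD K RD Omega alpha u1 u2 a1 a2 RD1 RD2 rho"
    have b: "p0 \<le> ?P" "?P \<le> 1" using bounds[of rho] elim by auto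
    have Ppos: "0 < ?P" using b p0pos p0_def by linarith
    have l1: "ln ?P \<le> 0" using b Ppos by simp
    have l2: "ln p0 \<le> ln ?P" using b p0pos p0_def Ppos by simp
    have lr: "0 < ln rho" using elim by simp
    have "norm (- (ln ?P / ln rho)) = (- ln ?P) / ln rho" 
    proof -
      have "ln ?P / ln rho \<le> 0" using l1 lr by (rule divide_nonpos_pos)
      thus ?thesis using l1 lr by (simp add: abs_of_nonpos abs_of_pos)
    qed
    also have "\<dots> \<le> M / ln rho" unfolding M_def using l2 lr by (intro divide_right_mono) auto
    finally show ?case .
  qed
  ultimately show ?thesis by (rule Lim_null_comparison[rotated])
qed

end
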